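(* Let $(A,\mu_A)$, $(B,\mu_B)$ be associative algebras, $\alpha_A:A\to A$, $\alpha_B:B\to B$ bijective algebra endomorphisms, and $R:B\otimes A\to A\otimes B$ an $(\alpha_A,\alpha_B)$-twisting map, written $R(b\otimes a)=a_R\otimes b_R$. Then the linear map $T:(A\otimes B)\otimes(A\otimes B)\to(A\otimes B)\otimes(A\otimes B)$, $T((a\otimes b)\otimes(a'\otimes b'))=(\alpha_A(a)\otimes b_R)\otimes(a'_R\otimes\alpha_B(b'))$, is an $(\alpha_A\otimes\alpha_B)$-pseudotwistor for the associative tensor product algebra $A\otimes B$, with companions $\tilde T_1=T_{13}\circ(\alpha_A^{-1}\otimes\alpha_B^{-1}\otimes\mathrm{id}_A\otimes\mathrm{id}_B\otimes\mathrm{id}_A\otimes\mathrm{id}_B)$ and $\tilde T_2=T_{13}\circ(\mathrm{id}_A\otimes\mathrm{id}_B\otimes\mathrm{id}_A\otimes\mathrm{id}_B\otimes\alpha_A^{-1}\otimes\alpha_B^{-1})$. The resulting Hom-associative algebra $(A\otimes B)^T_{\alpha_A\otimes\alpha_B}$ has multiplication $(a\otimes b)(a'\otimes b')=\alpha_A(a)a'_R\otimes b_R\alpha_B(b')$ and structure map $\alpha_A\otimes\alpha_B$.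
   Context: Over a field $k$; algebras not assumed unital; $A\otimes B$ has product $(a\otimes b)(a'\otimes b')=aa'\otimes bb'$. An $(\alpha_A,\alpha_B)$-twisting map is a linear $R:B\otimes A\to A\otimes B$ with $(\alpha_A\otimes\alpha_B)\circ R=R\circ(\alpha_B\otimes\alpha_A)$, $R\circ(\mathrm{id}_B\otimes\mu_A)=(\mu_A\otimes\mathrm{id}_B)\circ(\mathrm{id}_A\otimes R)\circ(\mathrm{id}_A\otimes\alpha_B^{-1}\otimes\mathrm{id}_A)\circ(R\otimes\mathrm{id}_A)$, $R\circ(\mu_B\otimes\mathrm{id}_A)=(\mathrm{id}_A\otimes\mu_B)\circ(R\otimes\mathrm{id}_B)\circ(\mathrm{id}_B\otimes\alpha_A^{-1}\otimes\mathrm{id}_B)\circ(\mathrm{id}_B\otimes R)$. For an associative algebra $(D,\mu)$ with algebra endomorphism $\alpha$, an $\alpha$-pseudotwistor with companions $\tilde T_1,\tilde T_2$ is a linear $T:D\otimes D\to D\otimes D$ with linear $\tilde T_1,\tilde T_2:D^{\otimes3}\to D^{\otimes3}$ satisfying $(\alpha\otimes\alpha)\circ T=T\circ(\alpha\otimes\alpha)$, $T\circ(\mathrm{id}_D\otimes\mu)=(\mathrm{id}_D\otimes\mu)\circ\tilde T_1\circ(T\otimes\mathrm{id}_D)$, $T\circ(\mu\otimes\mathrm{id}_D)=(\mu\otimes\mathrm{id}_D)\circ\tilde T_2\circ(\mathrm{id}_D\otimes T)$, $\tilde T_1\circ(T\otimes\mathrm{id}_D)\circ(\alpha\otimes T)=\tilde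 T_2\circ(\mathrm{id}_D\otimes T)\circ(T\otimes\alpha)$; then $D^T_\alpha:=(D,\mu\circ T,\alpha)$ is Hom-associative ($\alpha(xy)=\alpha(x)\alpha(y)$, $\alpha(x)(yz)=(xy)\alpha(z)$). For $T$ written $T(d\otimes d')=d^T\otimes d'_T$ ($d,d'\in D=A\otimes B$), $T_{13}(d\otimes d'\otimes d'')=d^T\otimes d'\otimes d''_T$. *)

theory Defs
  imports Main "HOL-Library.Poly_Mapping"
begin

text \<open>Vector spaces over a field 'k are modelled in coordinates: a k-vector space with
basis indexed by the type 'i is the space of finitely supported functions 'i =>0 'k.
The tensor product of the coordinate spaces on 'i and 'j is the coordinate space on 'i * 'j,
iterated tensor products are nested pairs of indices.\<close>

definition vsmul :: "'k::field \<Rightarrow> ('i \<Rightarrow>\<^sub>0 'k) \<Rightarrow> ('i \<Rightarrow>\<^sub>0 'k)" where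
  "vsmul c x = Poly_Mapping.map (\<lambda>v. c * v) x"

definition bvec :: "'i \<Rightarrow> ('i \<Rightarrow>\<^sub>0 'k::field)" where
  "bvec i = Poly_Mapping.single i 1"

definition klinear :: "(('i \<Rightarrow>\<^sub>0 'k::field) \<Rightarrow> ('j \<Rightarrow>\<^sub>0 'k)) \<Rightarrow> bool" where
  "klinear f \<longleftrightarrow> (\<forall>x y. f (x + y) = f x + f y) \<and> (\<forall>c x. f (vsmul c x) = vsmul c (f x))"

definition kbilinear :: "(('i \<Rightarrow>\<^sub>0 'k::field) \<Rightarrow> ('j \<Rightarrow>\<^sub>0 'k) \<Rightarrow> ('l \<Rightarrow>\<^sub>0 'k)) \<Rightarrow> bool" where
  "kbilinear m \<longleftrightarrow> (\<forall>x. klinear (m x)) \<and> (\<forall>y. klinear (\<lambda>x. m x y))"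

definition lext :: "('i \<Rightarrow> ('j \<Rightarrow>\<^sub>0 'k::field)) \<Rightarrow> ('i \<Rightarrow>\<^sub>0 'k) \<Rightarrow> ('j \<Rightarrow>\<^sub>0 'k)" where
  "lext g x = (\<Sum>i\<in>Poly_Mapping.keys x. vsmul (Poly_Mapping.lookup x i) (g i))"

definition tens :: "('i \<Rightarrow>\<^sub>0 'k::field) \<Rightarrow> ('j \<Rightarrow>\<^sub>0 'k) \<Rightarrow> ('i \<times> 'j \<Rightarrow>\<^sub>0 'k)" where
  "tens x y = (\<Sum>i\<in>Poly_Mapping.keys x. \<Sum>j\<in>Poly_Mapping.keys y. Poly_Mapping.single (i, j) (Poly_Mapping.lookup x i * Poly_Mapping.lookup y j))"

definition tmap :: "(('i \<Rightarrow>\<^sub>0 'k::field) \<Rightarrow> ('i2 \<Rightarrow>\<^sub>0 'k)) \<Rightarrow> (('j \<Rightarrow>\<^sub>0 'k) \<Rightarrow> ('j2 \<Rightarrow>\<^sub>0 'k))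
    \<Rightarrow> ('i \<times> 'j \<Rightarrow>\<^sub>0 'k) \<Rightarrow> ('i2 \<times> 'j2 \<Rightarrow>\<^sub>0 'k)" where
  "tmap f g = lext (\<lambda>(i, j). tens (f (bvec i)) (g (bvec j)))"

definition reidx :: "('i \<Rightarrow> 'j) \<Rightarrow> ('i \<Rightarrow>\<^sub>0 'k::field) \<Rightarrow> ('j \<Rightarrow>\<^sub>0 'k)" where
  "reidx h = lext (\<lambda>i. bvec (h i))"

definition r2l :: "('a \<times> 'b \<times> 'c \<Rightarrow>\<^sub>0 'k::field) \<Rightarrow> (('a \<times> 'b) \<times> 'c \<Rightarrow>\<^sub>0 'k)" where
  "r2l = reidx (\<lambda>(a, b, c). ((a, b), c))"

definition l2r :: "(('a \<times> 'b) \<times> 'c \<Rightarrow>\<^sub>0 'k::field) \<Rightarrow> ('a \<times> 'b \<times> 'c \<Rightarrow>\<^sub>0 'k)" where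
  "l2r = reidx (\<lambda>((a, b), c). (a, b, c))"

definition flip :: "('a \<times> 'b \<Rightarrow>\<^sub>0 'k::field) \<Rightarrow> ('b \<times> 'a \<Rightarrow>\<^sub>0 'k)" where
  "flip = reidx (\<lambda>(a, b). (b, a))"

definition mlin :: "(('i \<Rightarrow>\<^sub>0 'k::field) \<Rightarrow> ('i \<Rightarrow>\<^sub>0 'k) \<Rightarrow> ('i \<Rightarrow>\<^sub>0 'k))
    \<Rightarrow> ('i \<times> 'i \<Rightarrow>\<^sub>0 'k) \<Rightarrow> ('i \<Rightarrow>\<^sub>0 'k)" where
  "mlin m = lext (\<lambda>(i, i'). m (bvec i) (bvec i'))"

definition assoc_alg :: "(('i \<Rightarrow>\<^sub>0 'k::field) \<Rightarrow> ('i \<Rightarrow>\<^sub>0 'k) \<Rightarrow> ('i \<Rightarrow>\<^sub>0 'k)) \<Rightarrow> bool" where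
  "assoc_alg m \<longleftrightarrow> kbilinear m \<and> (\<forall>x y z. m (m x y) z = m x (m y z))"

definition alg_endo :: "(('i \<Rightarrow>\<^sub>0 'k::field) \<Rightarrow> ('i \<Rightarrow>\<^sub>0 'k) \<Rightarrow> ('i \<Rightarrow>\<^sub>0 'k))
    \<Rightarrow> (('i \<Rightarrow>\<^sub>0 'k) \<Rightarrow> ('i \<Rightarrow>\<^sub>0 'k)) \<Rightarrow> bool" where
  "alg_endo m \<alpha> \<longleftrightarrow> klinear \<alpha> \<and> (\<forall>x y. \<alpha> (m x y) = m (\<alpha> x) (\<alpha> y))"

definition tens_mult :: "(('i \<Rightarrow>\<^sub>0 'k::field) \<Rightarrow> ('i \<Rightarrow>\<^sub>0 'k) \<Rightarrow> ('i \<Rightarrow>\<^sub>0 'k))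
    \<Rightarrow> (('j \<Rightarrow>\<^sub>0 'k) \<Rightarrow> ('j \<Rightarrow>\<^sub>0 'k) \<Rightarrow> ('j \<Rightarrow>\<^sub>0 'k))
    \<Rightarrow> ('i \<times> 'j \<Rightarrow>\<^sub>0 'k) \<Rightarrow> ('i \<times> 'j \<Rightarrow>\<^sub>0 'k) \<Rightarrow> ('i \<times> 'j \<Rightarrow>\<^sub>0 'k)" where
  "tens_mult mA mB x y =
     lext (\<lambda>((i, j), (i', j')). tens (mA (bvec i) (bvec i')) (mB (bvec j) (bvec j'))) (tens x y)"

definition twisting_map ::
  "(('i \<Rightarrow>\<^sub>0 'k::field) \<Rightarrow> ('i \<Rightarrow>\<^sub>0 'k) \<Rightarrow> ('i \<Rightarrow>\<^sub>0 'k))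
   \<Rightarrow> (('j \<Rightarrow>\<^sub>0 'k) \<Rightarrow> ('j \<Rightarrow>\<^sub>0 'k) \<Rightarrow> ('j \<Rightarrow>\<^sub>0 'k))
   \<Rightarrow> (('i \<Rightarrow>\<^sub>0 'k) \<Rightarrow> ('i \<Rightarrow>\<^sub>0 'k)) \<Rightarrow> (('j \<Rightarrow>\<^sub>0 'k) \<Rightarrow> ('j \<Rightarrow>\<^sub>0 'k))
   \<Rightarrow> (('j \<times> 'i \<Rightarrow>\<^sub>0 'k) \<Rightarrow> ('i \<times> 'j \<Rightarrow>\<^sub>0 'k)) \<Rightarrow> bool" where
  "twisting_map mA mB \<alpha>A \<alpha>B R \<longleftrightarrow>
     klinear R \<and>
     tmap \<alpha>A \<alpha>B \<circ> R = R \<circ> tmap \<alpha>B \<alpha>A \<and>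
     \<comment> \<open>B \<otimes> (A \<otimes> A) \<rightarrow> A \<otimes> B\<close>
     R \<circ> tmap id (mlin mA) =
       tmap (mlin mA) id \<circ> r2l \<circ> tmap id R \<circ> l2r \<circ> tmap (tmap id (inv \<alpha>B)) id
         \<circ> tmap R id \<circ> r2l \<and>
     \<comment> \<open>(B \<otimes> B) \<otimes> A \<rightarrow> A \<otimes> B\<close>
     R \<circ> tmap (mlin mB) id =
       tmap id (mlin mB) \<circ> l2r \<circ> tmap R id \<circ> r2l \<circ> tmap id (tmap (inv \<alpha>A) id)
         \<circ> tmap id R \<circ> l2r"

definition pseudotwistor ::
  "(('d \<times> 'd \<Rightarrow>\<^sub>0 'k::field) \<Rightarrow> ('d \<Rightarrow>\<^sub>0 'k))
   \<Rightarrow> (('d \<Rightarrow>\<^sub>0 'k) \<Rightarrow> ('d \<Rightarrow>\<^sub>0 'k))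
   \<Rightarrow> (('d \<times> 'd \<Rightarrow>\<^sub>0 'k) \<Rightarrow> ('d \<times> 'd \<Rightarrow>\<^sub>0 'k))
   \<Rightarrow> (('d \<times> 'd \<times> 'd \<Rightarrow>\<^sub>0 'k) \<Rightarrow> ('d \<times> 'd \<times> 'd \<Rightarrow>\<^sub>0 'k))
   \<Rightarrow> (('d \<times> 'd \<times> 'd \<Rightarrow>\<^sub>0 'k) \<Rightarrow> ('d \<times> 'd \<times> 'd \<Rightarrow>\<^sub>0 'k)) \<Rightarrow> bool" where
  "pseudotwistor mu \<alpha> T T1 T2 \<longleftrightarrow>
     klinear T \<and> klinear T1 \<and> klinear T2 \<and>
     tmap \<alpha> \<alpha> \<circ> T = T \<circ> tmap \<alpha> \<alpha> \<and>
     T \<circ> tmap id mu = tmap id mu \<circ> T1 \<circ> l2r \<circ> tmap T id \<circ> r2l \<and>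
     T \<circ> tmap mu id \<circ> r2l = tmap mu id \<circ> r2l \<circ> T2 \<circ> tmap id T \<and>
     T1 \<circ> l2r \<circ> tmap T id \<circ> r2l \<circ> tmap \<alpha> T =
       T2 \<circ> tmap id T \<circ> l2r \<circ> tmap T \<alpha> \<circ> r2l"

definition T13 :: "(('d \<times> 'd \<Rightarrow>\<^sub>0 'k::field) \<Rightarrow> ('d \<times> 'd \<Rightarrow>\<^sub>0 'k))
    \<Rightarrow> ('d \<times> 'd \<times> 'd \<Rightarrow>\<^sub>0 'k) \<Rightarrow> ('d \<times> 'd \<times> 'd \<Rightarrow>\<^sub>0 'k)" where
  "T13 T = reidx (\<lambda>((x, z), y). (x, y, z)) \<circ> tmap T id \<circ> reidx (\<lambda>(x, y, z). ((x, z), y))"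

definition hom_associative :: "(('d \<Rightarrow>\<^sub>0 'k::field) \<Rightarrow> ('d \<Rightarrow>\<^sub>0 'k) \<Rightarrow> ('d \<Rightarrow>\<^sub>0 'k))
    \<Rightarrow> (('d \<Rightarrow>\<^sub>0 'k) \<Rightarrow> ('d \<Rightarrow>\<^sub>0 'k)) \<Rightarrow> bool" where
  "hom_associative m \<alpha> \<longleftrightarrow> kbilinear m \<and> klinear \<alpha> \<and>
     (\<forall>x y. \<alpha> (m x y) = m (\<alpha> x) (\<alpha> y)) \<and>
     (\<forall>x y z. m (\<alpha> x) (m y z) = m (m x y) (\<alpha> z))"

end

theory Submission
  imports Defs
begin


lemma lookup_vsmul[simp]: "Poly_Mapping.lookup (vsmul c x) k = c * Poly_Mapping.lookup x k"
  by (simp add: vsmul_def Poly_Mapping.map.rep_eq when_def)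

lemma lookup_bvec: "Poly_Mapping.lookup (bvec i) k = (if i = k then 1 else 0)"
  by (simp add: bvec_def lookup_single when_def)

lemma lookup_tens[simp]: "Poly_Mapping.lookup (tens x y) (i, j) = Poly_Mapping.lookup x i * Poly_Mapping.lookup y j"
proof -
  have "Poly_Mapping.lookup (tens x y) (i, j) =
    (\<Sum>i'\<in>Poly_Mapping.keys x. \<Sum>j'\<in>Poly_Mapping.keys y. (if i' = i \<and> j' = j then Poly_Mapping.lookup x i' * Poly_Mapping.lookup y j' else 0))"
    by (simp add: tens_def lookup_sum lookup_single when_def)
  also have "\<dots> = (\<Sum>i'\<in>Poly_Mapping.keys x. if i' = i then (\<Sum>j'\<in>Poly_Mapping.keys y. (if j' = j then Poly_Mapping.lookup x i' * Poly_Mapping.lookup y j' else 0)) else 0)"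
    by (intro sum.cong) auto
  also have "\<dots> = Poly_Mapping.lookup x i * Poly_Mapping.lookup y j"
    by (simp add: in_keys_iff)
  finally show ?thesis .
qed

lemma vsmul_add: "vsmul c (x + y) = vsmul c x + vsmul c y"
  by (rule poly_mapping_eqI) (simp add: lookup_add algebra_simps)
lemma vsmul_add2: "vsmul (a + b) x = vsmul a x + vsmul b x"
  by (rule poly_mapping_eqI) (simp add: lookup_add algebra_simps)
lemma vsmul_vsmul: "vsmul a (vsmul b x) = vsmul (a * b) x"
  by (rule poly_mapping_eqI) simp
lemma vsmul_zero[simp]: "vsmul c 0 = 0"
  by (rule poly_mapping_eqI) simp
lemma vsmul_zero2[simp]: "vsmul 0 x = 0"
  by (rule poly_mapping_eqI) simp
lemma vsmul_sum: "vsmul c (sum f S) = (\<Sum>i\<in>S. vsmul c (f i))"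
  by (rule poly_mapping_eqI) (simp add: lookup_sum sum_distrib_left)

lemma klinear_zero: "klinear f \<Longrightarrow> f 0 = 0"
  unfolding klinear_def by (metis add_cancel_right_right)

lemma klinear_sum: "klinear f \<Longrightarrow> f (sum g S) = (\<Sum>i\<in>S. f (g i))"
  by (induction S rule: infinite_finite_induct)
     (auto simp: klinear_zero, simp add: klinear_def)

lemma klinear_add: "klinear f \<Longrightarrow> f (x + y) = f x + f y"
  by (simp add: klinear_def)
lemma klinear_vsmul: "klinear f \<Longrightarrow> f (vsmul c x) = vsmul c (f x)"
  by (simp add: klinear_def)

lemma expand: "x = (\<Sum>i\<in>Poly_Mapping.keys x. vsmul (Poly_Mapping.lookup x i) (bvec i))"
proof (rule poly_mapping_eqI)
  fix k
  have "Poly_Mapping.lookup (\<Sum>i\<in>Poly_Mapping.keys x. vsmul (Poly_Mapping.lookup x i) (bvec i)) k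
      = (\<Sum>i\<in>Poly_Mapping.keys x. if i = k then Poly_Mapping.lookup x i else 0)"
    by (simp add: lookup_sum lookup_bvec if_distrib cong: if_cong)
  also have "\<dots> = Poly_Mapping.lookup x k" by (simp add: in_keys_iff)
  finally show "Poly_Mapping.lookup x k = Poly_Mapping.lookup (\<Sum>i\<in>Poly_Mapping.keys x. vsmul (Poly_Mapping.lookup x i) (bvec i)) k" ..
qed

lemma lin_eq:
  assumes "klinear F" "klinear G" "\<And>i. F (bvec i) = G (bvec i)"
  shows "F x = G x"
proof -
  have "F x = F (\<Sum>i\<in>Poly_Mapping.keys x. vsmul (Poly_Mapping.lookup x i) (bvec i))" by (subst expand, rule refl)
  also have "\<dots> = G (\<Sum>i\<in>Poly_Mapping.keys x. vsmul (Poly_Mapping.lookup x i) (bvec i))"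
    using assms by (simp add: klinear_sum klinear_vsmul)
  finally show ?thesis by (subst expand) 
qed

lemma lin_eq_fun:
  assumes "klinear F" "klinear G" "\<And>i. F (bvec i) = G (bvec i)"
  shows "F = G"
  using lin_eq[OF assms] by blast

lemma lext_superset:
  assumes "finite S" "Poly_Mapping.keys x \<subseteq> S"
  shows "lext g x = (\<Sum>i\<in>S. vsmul (Poly_Mapping.lookup x i) (g i))"
  unfolding lext_def
  by (rule sum.mono_neutral_left[OF assms(1,2)]) (auto simp: in_keys_iff)

lemma klinear_lext: "klinear (lext g)"
  unfolding klinear_def
proof (intro conjI allI)
  fix x y :: "'a \<Rightarrow>\<^sub>0 'b"
  let ?S = "Poly_Mapping.keys x \<union> Poly_Mapping.keys y"
  have "lext g (x + y) = (\<Sum>i\<in>?S. vsmul (Poly_Mapping.lookup (x+y) i) (g i))"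
    by (rule lext_superset) (auto simp: keys_add)
  also have "\<dots> = (\<Sum>i\<in>?S. vsmul (Poly_Mapping.lookup x i) (g i)) + (\<Sum>i\<in>?S. vsmul (Poly_Mapping.lookup y i) (g i))"
    by (simp add: lookup_add vsmul_add2 sum.distrib)
  also have "\<dots> = lext g x + lext g y"
    using lext_superset[of ?S x g] lext_superset[of ?S y g] by simp
  finally show "lext g (x + y) = lext g x + lext g y" .
next
  fix c and x :: "'a \<Rightarrow>\<^sub>0 'b"
  have "lext g (vsmul c x) = (\<Sum>i\<in>Poly_Mapping.keys x. vsmul (Poly_Mapping.lookup (vsmul c x) i) (g i))"
    by (rule lext_superset) (auto simp: in_keys_iff)
  also have "\<dots> = vsmul c (lext g x)"
    by (simp add: lext_def vsmul_sum vsmul_vsmul)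
  finally show "lext g (vsmul c x) = vsmul c (lext g x)" .
qed

lemma lext_bvec[simp]: "lext g (bvec i) = g i"
proof -
  have "lext g (bvec i) = (\<Sum>k\<in>{i}. vsmul (Poly_Mapping.lookup (bvec i) k) (g k))"
    by (rule lext_superset) (auto simp: in_keys_iff lookup_bvec split: if_splits)
  also have "\<dots> = g i" by (simp add: lookup_bvec) (rule poly_mapping_eqI, simp)
  finally show ?thesis .
qed

lemma bvec_pair: "bvec (i, j) = tens (bvec i) (bvec j)"
  by (rule poly_mapping_eqI) (auto simp: lookup_bvec split: if_splits)

lemma klinear_tens1: "klinear (\<lambda>x. tens x y)"
  unfolding klinear_def
  by (auto intro!: poly_mapping_eqI simp: lookup_add algebra_simps)
lemma klinear_tens2: "klinear (tens x)"
  unfolding klinear_def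
  by (auto intro!: poly_mapping_eqI simp: lookup_add algebra_simps)

lemma klinear_id: "klinear (\<lambda>x. x)" "klinear id"
  by (auto simp: klinear_def)

lemma klinear_comp: "klinear f \<Longrightarrow> klinear g \<Longrightarrow> klinear (f \<circ> g)"
  by (simp add: klinear_def)
lemma klinear_compL: "klinear f \<Longrightarrow> klinear g \<Longrightarrow> klinear (\<lambda>x. f (g x))"
  by (simp add: klinear_def)

lemma klinear_tmap: "klinear (tmap f g)" by (simp add: tmap_def klinear_lext)
lemma klinear_reidx: "klinear (reidx h)" by (simp add: reidx_def klinear_lext)
lemma klinear_l2r: "klinear l2r" by (simp add: l2r_def klinear_reidx)
lemma klinear_r2l: "klinear r2l" by (simp add: r2l_def klinear_reidx)
lemma klinear_flip: "klinear flip" by (simp add: flip_def klinear_reidx)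
lemma klinear_mlin: "klinear (mlin m)" by (simp add: mlin_def klinear_lext)

lemma lin_eq_tens:
  assumes "klinear F" "klinear G" "\<And>x y. F (tens x y) = G (tens x y)"
  shows "F = G"
  by (rule lin_eq_fun[OF assms(1,2)]) (auto simp: bvec_pair assms(3))

lemma bilin_eq:
  assumes "\<And>y. klinear (\<lambda>x. F x y)" "\<And>x. klinear (F x)"
    "\<And>y. klinear (\<lambda>x. G x y)" "\<And>x. klinear (G x)"
    "\<And>i j. F (bvec i) (bvec j) = G (bvec i) (bvec j)"
  shows "F x y = G x y"
proof -
  have "F x (bvec j) = G x (bvec j)" for j
    using lin_eq[of "\<lambda>x. F x (bvec j)" "\<lambda>x. G x (bvec j)"] assms by blast
  then show ?thesis using lin_eq[of "F x" "G x"] assms by blast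
qed

lemma tmap_tens:
  assumes "klinear f" "klinear g"
  shows "tmap f g (tens x y) = tens (f x) (g y)"
proof (rule bilin_eq[where F="\<lambda>x y. tmap f g (tens x y)" and G="\<lambda>x y. tens (f x) (g y)"])
  show "klinear (\<lambda>x. tmap f g (tens x y))" for y
    by (rule klinear_compL[OF klinear_tmap klinear_tens1])
  show "klinear (\<lambda>y. tmap f g (tens x y))" for x
    by (rule klinear_compL[OF klinear_tmap klinear_tens2])
  show "klinear (\<lambda>x. tens (f x) (g y))" for y
    by (rule klinear_compL[OF klinear_tens1 assms(1)])
  show "klinear (\<lambda>y. tens (f x) (g y))" for x
    by (rule klinear_compL[OF klinear_tens2 assms(2)])
  show "tmap f g (tens (bvec i) (bvec j)) = tens (f (bvec i)) (g (bvec j))" for i j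
    by (simp add: tmap_def bvec_pair[symmetric])
qed

lemma lookup_reidx:
  assumes "\<And>k. h (g k) = k" "\<And>i. g (h i) = i"
  shows "Poly_Mapping.lookup (reidx h x) k = Poly_Mapping.lookup x (g k)"
proof -
  have e: "h i = k \<longleftrightarrow> i = g k" for i using assms by metis
  have "Poly_Mapping.lookup (reidx h x) k = (\<Sum>i\<in>Poly_Mapping.keys x. Poly_Mapping.lookup x i * (if h i = k then 1 else 0))"
    unfolding reidx_def lext_def by (simp add: lookup_sum lookup_bvec)
  also have "\<dots> = (\<Sum>i\<in>Poly_Mapping.keys x. if i = g k then Poly_Mapping.lookup x i else 0)"
    by (rule sum.cong) (auto simp: e)
  also have "\<dots> = Poly_Mapping.lookup x (g k)" by (simp add: in_keys_iff)
  finally show ?thesis .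
qed

lemma lookup_l2r[simp]: "Poly_Mapping.lookup (l2r v) (a,b,c) = Poly_Mapping.lookup v ((a,b),c)"
  unfolding l2r_def by (subst lookup_reidx[where g="\<lambda>(a,b,c). ((a,b),c)"]) auto

lemma l2r_tens[simp]: "l2r (tens (tens x y) z) = tens x (tens y z)"
  by (rule poly_mapping_eqI) (auto simp: mult.assoc)


lemma lookup_r2l[simp]: "Poly_Mapping.lookup (r2l v) ((a,b),c) = Poly_Mapping.lookup v (a,b,c)"
  unfolding r2l_def by (subst lookup_reidx[where g="\<lambda>((a,b),c). (a,b,c)"]) auto
lemma r2l_tens[simp]: "r2l (tens x (tens y z)) = tens (tens x y) z"
  by (rule poly_mapping_eqI) (auto simp: mult.assoc)
lemma l2r_r2l[simp]: "l2r (r2l v) = v"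
  by (rule poly_mapping_eqI) auto
lemma r2l_l2r[simp]: "r2l (l2r v) = v"
  by (rule poly_mapping_eqI) auto
lemma lookup_flip[simp]: "Poly_Mapping.lookup (flip v) (a,b) = Poly_Mapping.lookup v (b,a)"
  unfolding flip_def by (subst lookup_reidx[where g="\<lambda>(a,b). (b,a)"]) auto
lemma flip_tens[simp]: "flip (tens x y) = tens y x"
  by (rule poly_mapping_eqI) (auto simp: mult.commute)

lemma lookup_P[simp]: "Poly_Mapping.lookup (reidx (\<lambda>(a, (b, a'), b'). ((a, b), (a', b'))) v) ((a, b), (a', b'))
   = Poly_Mapping.lookup v (a, (b, a'), b')"
  by (subst lookup_reidx[where g="\<lambda>((a, b), (a', b')). (a, (b, a'), b')"]) auto
lemma P_tens[simp]: "reidx (\<lambda>(a, (b, a'), b'). ((a, b), (a', b'))) (tens a (tens (tens y x) b')) = tens (tens a y) (tens x b')"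
  by (rule poly_mapping_eqI) (auto simp: ac_simps)
lemma lookup_Q[simp]: "Poly_Mapping.lookup (reidx (\<lambda>((a, b), (a', b')). (a, (b, a'), b')) v) (a, (b, a'), b')
   = Poly_Mapping.lookup v ((a, b), (a', b'))"
  by (subst lookup_reidx[where g="\<lambda>(a, (b, a'), b'). ((a, b), (a', b'))"]) auto
lemma Q_tens[simp]: "reidx (\<lambda>((a, b), (a', b')). (a, (b, a'), b')) (tens (tens a b) (tens a' b')) = tens a (tens (tens b a') b')"
  by (rule poly_mapping_eqI) (auto simp: ac_simps)
lemma lookup_S1[simp]: "Poly_Mapping.lookup (reidx (\<lambda>((x, z), y). (x, y, z)) v) (x, y, z)
   = Poly_Mapping.lookup v ((x, z), y)"
  by (subst lookup_reidx[where g="\<lambda>(x, y, z). ((x, z), y)"]) auto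
lemma S1_tens[simp]: "reidx (\<lambda>((x, z), y). (x, y, z)) (tens (tens p r) q) = tens p (tens q r)"
  by (rule poly_mapping_eqI) (auto simp: ac_simps)
lemma lookup_S2[simp]: "Poly_Mapping.lookup (reidx (\<lambda>(x, y, z). ((x, z), y)) v) ((x, z), y)
   = Poly_Mapping.lookup v (x, y, z)"
  by (subst lookup_reidx[where g="\<lambda>((x, z), y). (x, y, z)"]) auto
lemma S2_tens[simp]: "reidx (\<lambda>(x, y, z). ((x, z), y)) (tens p (tens q r)) = tens (tens p r) q"
  by (rule poly_mapping_eqI) (auto simp: ac_simps)
lemma lookup_Sm[simp]: "Poly_Mapping.lookup (reidx (\<lambda>((a, b), (a', b')). ((a, a'), (b, b'))) v) ((a, a'), (b, b'))
   = Poly_Mapping.lookup v ((a, b), (a', b'))"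
  by (subst lookup_reidx[where g="\<lambda>((a, a'), (b, b')). ((a, b), (a', b'))"]) auto
lemma Sm_tens[simp]: "reidx (\<lambda>((a, b), (a', b')). ((a, a'), (b, b'))) (tens (tens a b) (tens a' b')) = tens (tens a a') (tens b b')"
  by (rule poly_mapping_eqI) (auto simp: ac_simps)

lemma reidx_bvec[simp]: "reidx h (bvec i) = bvec (h i)"
  by (simp add: reidx_def)

lemma mlin_tens:
  assumes "kbilinear m"
  shows "mlin m (tens x y) = m x y"
  by (rule bilin_eq[where F="\<lambda>x y. mlin m (tens x y)" and G=m])
     (use assms in \<open>auto simp: kbilinear_def mlin_def bvec_pair[symmetric]
        intro: klinear_compL[OF klinear_lext klinear_tens1] klinear_compL[OF klinear_lext klinear_tens2]\<close>)

lemma tens_mult_eq: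
  assumes "kbilinear mA" "kbilinear mB"
  shows "tens_mult mA mB x y = tmap (mlin mA) (mlin mB) (reidx (\<lambda>((a, b), (a', b')). ((a, a'), (b, b'))) (tens x y))"
proof -
  have "lext (\<lambda>((i, j), (i', j')). tens (mA (bvec i) (bvec i')) (mB (bvec j) (bvec j')))
      = tmap (mlin mA) (mlin mB) \<circ> reidx (\<lambda>((a, b), (a', b')). ((a, a'), (b, b')))"
    by (rule lin_eq_fun)
       (auto simp: klinear_lext klinear_comp klinear_tmap klinear_reidx bvec_pair tmap_tens
         klinear_mlin mlin_tens assms)
  then show ?thesis unfolding tens_mult_def by (metis comp_apply)
qed

lemma tens_mult_tens:
  assumes "kbilinear mA" "kbilinear mB"
  shows "tens_mult mA mB (tens a b) (tens a' b') = tens (mA a a') (mB b b')"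
  by (simp add: tens_mult_eq assms tmap_tens klinear_mlin mlin_tens)

lemma kbilinear_tens_mult: "kbilinear (tens_mult mA mB)"
  unfolding kbilinear_def tens_mult_def
  by (auto intro: klinear_compL[OF klinear_lext klinear_tens1] klinear_compL[OF klinear_lext klinear_tens2])

lemma lin4:
  assumes "klinear F" "klinear G" "\<And>a b a' b'. F (tens (tens a b) (tens a' b')) = G (tens (tens a b) (tens a' b'))"
  shows "F = G"
  by (rule lin_eq_fun[OF assms(1,2)]) (auto simp: bvec_pair assms(3))

lemma lin6:
  assumes "klinear F" "klinear G" "\<And>a b a' b' a'' b''. F (tens (tens a b) (tens (tens a' b') (tens a'' b''))) = G (tens (tens a b) (tens (tens a' b') (tens a'' b'')))"
  shows "F = G"
  by (rule lin_eq_fun[OF assms(1,2)]) (auto simp: bvec_pair assms(3))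

named_theorems lin
lemma [lin]: "klinear (\<lambda>u. u)" by (simp add: klinear_def)
lemma [lin]: "klinear F \<Longrightarrow> klinear (\<lambda>u. tens (F u) y)" by (rule klinear_compL[OF klinear_tens1])
lemma [lin]: "klinear F \<Longrightarrow> klinear (\<lambda>u. tens x (F u))" by (rule klinear_compL[OF klinear_tens2])
lemma [lin]: "klinear F \<Longrightarrow> klinear (\<lambda>u. tmap f g (F u))" by (rule klinear_compL[OF klinear_tmap])
lemma [lin]: "klinear F \<Longrightarrow> klinear (\<lambda>u. reidx h (F u))" by (rule klinear_compL[OF klinear_reidx])
lemma [lin]: "klinear F \<Longrightarrow> klinear (\<lambda>u. l2r (F u))" by (rule klinear_compL[OF klinear_l2r])
lemma [lin]: "klinear F \<Longrightarrow> klinear (\<lambda>u. r2l (F u))" by (rule klinear_compL[OF klinear_r2l])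
lemma [lin]: "klinear F \<Longrightarrow> klinear (\<lambda>u. flip (F u))" by (rule klinear_compL[OF klinear_flip])
lemma [lin]: "klinear F \<Longrightarrow> klinear (\<lambda>u. mlin m (F u))" by (rule klinear_compL[OF klinear_mlin])

lemma klinear_inv:
  assumes "klinear f" "bij f"
  shows "klinear (inv f)"
proof -
  have a: "f (inv f x) = x" for x using assms(2) by (simp add: bij_is_surj surj_f_inv_f)
  have b: "inv f (f x) = x" for x using assms(2) by (simp add: bij_is_inj)
  show ?thesis unfolding klinear_def
  proof (intro conjI allI)
    fix x y
    have "inv f (x + y) = inv f (f (inv f x) + f (inv f y))" by (simp add: a)
    also have "\<dots> = inv f (f (inv f x + inv f y))" by (simp add: klinear_add[OF assms(1)])
    finally show "inv f (x + y) = inv f x + inv f y" by (simp add: b)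
  next
    fix c x
    have "inv f (vsmul c x) = inv f (vsmul c (f (inv f x)))" by (simp add: a)
    also have "\<dots> = inv f (f (vsmul c (inv f x)))" by (simp add: klinear_vsmul[OF assms(1)])
    finally show "inv f (vsmul c x) = vsmul c (inv f x)" by (simp add: b)
  qed
qed


lemma gen_first: "(\<And>x y. F (tens x y) = G (tens x y)) \<Longrightarrow> klinear F \<Longrightarrow> klinear G \<Longrightarrow> F = G"
  by (rule lin_eq_tens)

lemma klinear_T13[simp]: "klinear (T13 F)"
  unfolding T13_def by (intro klinear_comp klinear_reidx klinear_tmap)

lemma T13_tens[simp]: "klinear F \<Longrightarrow> T13 F (tens p (tens q r)) = reidx (\<lambda>((x, z), y). (x, y, z)) (tens (F (tens p r)) q)"
  unfolding T13_def by (simp add: tmap_tens klinear_id)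

lemma [lin]: "klinear F \<Longrightarrow> klinear (\<lambda>u. T13 G (F u))" by (rule klinear_compL[OF klinear_T13])


lemma lext_bil:
  assumes "\<And>y. klinear (\<lambda>x. f x y)" "\<And>x. klinear (f x)"
  shows "lext (\<lambda>(i, j). f (bvec i) (bvec j)) (tens x y) = f x y"
  by (rule bilin_eq[where F="\<lambda>x y. lext (\<lambda>(i, j). f (bvec i) (bvec j)) (tens x y)" and G=f])
     (use assms in \<open>auto simp: bvec_pair[symmetric]
        intro: klinear_compL[OF klinear_lext klinear_tens1] klinear_compL[OF klinear_lext klinear_tens2]\<close>)

lemma klinear_lext_param:
  assumes "\<And>i j. klinear (\<lambda>u. g u i j)"
  shows "klinear (\<lambda>u. lext (\<lambda>(i, j). g u i j) w)"
  unfolding klinear_def lext_def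
proof (intro conjI allI)
  fix x y
  show "(\<Sum>p\<in>Poly_Mapping.keys w. vsmul (Poly_Mapping.lookup w p) (case p of (i, j) \<Rightarrow> g (x + y) i j)) =
    (\<Sum>p\<in>Poly_Mapping.keys w. vsmul (Poly_Mapping.lookup w p) (case p of (i, j) \<Rightarrow> g x i j)) +
    (\<Sum>p\<in>Poly_Mapping.keys w. vsmul (Poly_Mapping.lookup w p) (case p of (i, j) \<Rightarrow> g y i j))"
    by (simp add: sum.distrib[symmetric] vsmul_add[symmetric] klinear_add[OF assms] case_prod_beta)
next
  fix c x
  show "(\<Sum>p\<in>Poly_Mapping.keys w. vsmul (Poly_Mapping.lookup w p) (case p of (i, j) \<Rightarrow> g (vsmul c x) i j)) =
    vsmul c (\<Sum>p\<in>Poly_Mapping.keys w. vsmul (Poly_Mapping.lookup w p) (case p of (i, j) \<Rightarrow> g x i j))"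
    by (simp add: vsmul_sum vsmul_vsmul klinear_vsmul[OF assms] mult.commute case_prod_beta)
qed

lemma bil_pure:
  assumes "\<And>u2. klinear (\<lambda>u1. F u1 u2)" "\<And>u1. klinear (F u1)"
    "\<And>u2. klinear (\<lambda>u1. G u1 u2)" "\<And>u1. klinear (G u1)"
    "\<And>x1 y1 x2 y2. F (tens x1 y1) (tens x2 y2) = G (tens x1 y1) (tens x2 y2)"
  shows "F u1 u2 = G u1 u2"
  by (rule bilin_eq[where F=F and G=G]) (use assms in \<open>auto simp: bvec_pair\<close>)



locale ctx =
  fixes mA :: "('i \<Rightarrow>\<^sub>0 'k::field) \<Rightarrow> ('i \<Rightarrow>\<^sub>0 'k) \<Rightarrow> ('i \<Rightarrow>\<^sub>0 'k)"
    and mB :: "('j \<Rightarrow>\<^sub>0 'k) \<Rightarrow> ('j \<Rightarrow>\<^sub>0 'k) \<Rightarrow> ('j \<Rightarrow>\<^sub>0 'k)"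
    and \<alpha>A :: "('i \<Rightarrow>\<^sub>0 'k) \<Rightarrow> ('i \<Rightarrow>\<^sub>0 'k)"
    and \<alpha>B :: "('j \<Rightarrow>\<^sub>0 'k) \<Rightarrow> ('j \<Rightarrow>\<^sub>0 'k)"
    and R :: "('j \<times> 'i \<Rightarrow>\<^sub>0 'k) \<Rightarrow> ('i \<times> 'j \<Rightarrow>\<^sub>0 'k)"
  assumes aA: "assoc_alg mA" and aB: "assoc_alg mB"
    and eA: "alg_endo mA \<alpha>A" and bA: "bij \<alpha>A"
    and eB: "alg_endo mB \<alpha>B" and bB: "bij \<alpha>B"
    and tw: "twisting_map mA mB \<alpha>A \<alpha>B R"
begin

definition TT where "TT = reidx (\<lambda>(a, (b, a'), b'). ((a, b), (a', b')))
                 \<circ> tmap \<alpha>A (tmap (flip \<circ> R) \<alpha>B)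
                 \<circ> reidx (\<lambda>((a, b), (a', b')). (a, (b, a'), b'))"

abbreviation "muD \<equiv> mlin (tens_mult mA mB)"
abbreviation "\<alpha> \<equiv> tmap \<alpha>A \<alpha>B"

lemma bilA: "kbilinear mA" and bilB: "kbilinear mB"
  using aA aB by (auto simp: assoc_alg_def)

lemma linA[simp]: "klinear \<alpha>A" and linB[simp]: "klinear \<alpha>B"
  using eA eB by (auto simp: alg_endo_def)
lemma linR[simp]: "klinear R" using tw by (simp add: twisting_map_def)
lemma liniA[simp]: "klinear (inv \<alpha>A)" and liniB[simp]: "klinear (inv \<alpha>B)"
  by (auto intro: klinear_inv bA bB)
lemma invA[simp]: "\<alpha>A (inv \<alpha>A x) = x" "inv \<alpha>A (\<alpha>A x) = x"
  using bA by (auto simp: bij_is_surj surj_f_inv_f bij_is_inj)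
lemma invB[simp]: "\<alpha>B (inv \<alpha>B x) = x" "inv \<alpha>B (\<alpha>B x) = x"
  using bB by (auto simp: bij_is_surj surj_f_inv_f bij_is_inj)
lemma mulA[simp]: "\<alpha>A (mA x y) = mA (\<alpha>A x) (\<alpha>A y)" using eA by (simp add: alg_endo_def)
lemma mulB[simp]: "\<alpha>B (mB x y) = mB (\<alpha>B x) (\<alpha>B y)" using eB by (simp add: alg_endo_def)
lemma assA: "mA (mA x y) z = mA x (mA y z)" using aA by (simp add: assoc_alg_def)
lemma assB: "mB (mB x y) z = mB x (mB y z)" using aB by (simp add: assoc_alg_def)
lemma linmA[simp]: "klinear (mA x)" "klinear (\<lambda>x. mA x y)" using bilA by (auto simp: kbilinear_def)
lemma linmB[simp]: "klinear (mB x)" "klinear (\<lambda>x. mB x y)" using bilB by (auto simp: kbilinear_def)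
lemmas basic_lin[simp] = klinear_id klinear_tmap klinear_reidx klinear_l2r klinear_r2l klinear_flip klinear_mlin

lemma [lin]: "klinear F \<Longrightarrow> klinear (\<lambda>u. R (F u))" by (rule klinear_compL[OF linR])
lemma [lin]: "klinear F \<Longrightarrow> klinear (\<lambda>u. \<alpha>A (F u))" by (rule klinear_compL[OF linA])
lemma [lin]: "klinear F \<Longrightarrow> klinear (\<lambda>u. \<alpha>B (F u))" by (rule klinear_compL[OF linB])

lemmas tmapt[simp] = tmap_tens

lemma muA[simp]: "mlin mA (tens x y) = mA x y" by (rule mlin_tens[OF bilA])
lemma muB[simp]: "mlin mB (tens x y) = mB x y" by (rule mlin_tens[OF bilB])
lemma muD[simp]: "muD (tens (tens a b) (tens a' b')) = tens (mA a a') (mB b b')"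
  by (simp add: mlin_tens kbilinear_tens_mult tens_mult_tens bilA bilB)

lemma klinTT[simp]: "klinear TT"
  unfolding TT_def by (intro klinear_comp basic_lin)

lemma TT_tens[simp]: "TT (tens (tens a b) (tens a' b')) =
   reidx (\<lambda>(a, (b, a'), b'). ((a, b), (a', b'))) (tens (\<alpha>A a) (tens (flip (R (tens b a'))) (\<alpha>B b')))"
  unfolding TT_def by (simp add: klinear_comp)

lemma [lin]: "klinear F \<Longrightarrow> klinear (\<lambda>u. TT (F u))" by (rule klinear_compL[OF klinTT])

lemma TW0: "R (tens (\<alpha>B b) (\<alpha>A a)) = tmap \<alpha>A \<alpha>B (R (tens b a))"
proof -
  have "tmap \<alpha>A \<alpha>B \<circ> R = R \<circ> tmap \<alpha>B \<alpha>A" using tw by (simp add: twisting_map_def)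
  then show ?thesis by (metis comp_apply tmapt linA linB)
qed

lemma TW1: "R (tens b (mA a a'')) =
  tmap (mlin mA) id (r2l (tmap id R (l2r (tens (tmap id (inv \<alpha>B) (R (tens b a))) a''))))"
proof -
  have "R \<circ> tmap id (mlin mA) =
       tmap (mlin mA) id \<circ> r2l \<circ> tmap id R \<circ> l2r \<circ> tmap (tmap id (inv \<alpha>B)) id
         \<circ> tmap R id \<circ> r2l" using tw by (simp add: twisting_map_def)
  from fun_cong[OF this, of "tens b (tens a a'')"] show ?thesis by simp
qed

lemma TW2: "R (tens (mB b b') a) =
  tmap id (mlin mB) (l2r (tmap R id (r2l (tens b (tmap (inv \<alpha>A) id (R (tens b' a)))))))"
proof -
  have "R \<circ> tmap (mlin mB) id =
       tmap id (mlin mB) \<circ> l2r \<circ> tmap R id \<circ> r2l \<circ> tmap id (tmap (inv \<alpha>A) id)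
         \<circ> tmap id R \<circ> l2r" using tw by (simp add: twisting_map_def)
  from fun_cong[OF this, of "tens (tens b b') a"] show ?thesis by simp
qed

lemma final: "muD (TT (tens (tens a b) (tens a' b'))) =
             tmap (mA (\<alpha>A a)) (\<lambda>y. mB y (\<alpha>B b')) (R (tens b a'))"
proof -
  have "(\<lambda>u. muD (reidx (\<lambda>(a, (b, a'), b'). ((a, b), (a', b'))) (tens (\<alpha>A a) (tens (flip u) (\<alpha>B b')))))
      = (\<lambda>u. tmap (mA (\<alpha>A a)) (\<lambda>y. mB y (\<alpha>B b')) u)"
    by (rule lin_eq_tens) (intro lin | simp)+
  from fun_cong[OF this, of "R (tens b a')"] show ?thesis by simp
qed

lemma cond1: "tmap \<alpha> \<alpha> \<circ> TT = TT \<circ> tmap \<alpha> \<alpha>"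
proof (rule lin4)
  show "klinear (tmap \<alpha> \<alpha> \<circ> TT)" "klinear (TT \<circ> tmap \<alpha> \<alpha>)" by (simp_all add: klinear_comp)
  fix a b a' b'
  have "(\<lambda>u. tmap \<alpha> \<alpha> (reidx (\<lambda>(a, (b, a'), b'). ((a, b), (a', b'))) (tens (\<alpha>A a) (tens (flip u) (\<alpha>B b')))))
     = (\<lambda>u. reidx (\<lambda>(a, (b, a'), b'). ((a, b), (a', b'))) (tens (\<alpha>A (\<alpha>A a)) (tens (flip (tmap \<alpha>A \<alpha>B u)) (\<alpha>B (\<alpha>B b')))))"
    by (rule lin_eq_tens) (intro lin | simp)+
  from fun_cong[OF this, of "R (tens b a')"]
  show "(tmap \<alpha> \<alpha> \<circ> TT) (tens (tens a b) (tens a' b')) = (TT \<circ> tmap \<alpha> \<alpha>) (tens (tens a b) (tens a' b'))"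
    by (simp add: TW0)
qed


lemmas TWs[simp] = TW0 TW1 TW2

lemma cond2: "TT \<circ> tmap id muD = tmap id muD \<circ> (T13 TT \<circ> tmap (tmap (inv \<alpha>A) (inv \<alpha>B)) id) \<circ> l2r \<circ> tmap TT id \<circ> r2l"
proof (rule lin6)
  show "klinear (TT \<circ> tmap id muD)" by (simp add: klinear_comp)
  show "klinear (tmap id muD \<circ> (T13 TT \<circ> tmap (tmap (inv \<alpha>A) (inv \<alpha>B)) id) \<circ> l2r \<circ> tmap TT id \<circ> r2l)"
    by (simp add: klinear_comp)
  fix a b a' b' a'' b''
  have eq: "(\<lambda>u. reidx (\<lambda>(a, (b, a'), b'). ((a, b), (a', b'))) (tens (\<alpha>A a) (tens (flip
        (tmap (mlin mA) id (r2l (tmap id R (l2r (tens (tmap id (inv \<alpha>B) u) a''))))))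
        (mB (\<alpha>B b') (\<alpha>B b'')))))
     = (\<lambda>u. tmap id muD (T13 TT (tmap (tmap (inv \<alpha>A) (inv \<alpha>B)) id (l2r (tens
        (reidx (\<lambda>(a, (b, a'), b'). ((a, b), (a', b'))) (tens (\<alpha>A a) (tens (flip u) (\<alpha>B b'))))
        (tens a'' b''))))))"
    apply (rule gen_first)
    subgoal for x y
    proof -
      have "(\<lambda>v. reidx (\<lambda>(a, (b, a'), b'). ((a, b), (a', b'))) (tens (\<alpha>A a) (tens (flip
             (tmap (mlin mA) id (r2l (tens x v)))) (mB (\<alpha>B b') (\<alpha>B b'')))))
          = (\<lambda>v. tmap id muD (reidx (\<lambda>((x, z), y). (x, y, z)) (tens
             (reidx (\<lambda>(a, (b, a'), b'). ((a, b), (a', b'))) (tens (\<alpha>A a) (tens (flip v) (\<alpha>B b''))))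
             (tens x (\<alpha>B b')))))"
        by (rule gen_first) (simp, (intro lin | simp)+)
      from fun_cong[OF this, of "R (tens (inv \<alpha>B y) a'')"] show ?thesis by simp
    qed
    by (intro lin | simp)+
  from fun_cong[OF eq, of "R (tens b a')"]
  show "(TT \<circ> tmap id muD) (tens (tens a b) (tens (tens a' b') (tens a'' b''))) =
        (tmap id muD \<circ> (T13 TT \<circ> tmap (tmap (inv \<alpha>A) (inv \<alpha>B)) id) \<circ> l2r \<circ> tmap TT id \<circ> r2l)
          (tens (tens a b) (tens (tens a' b') (tens a'' b'')))"
    by simp
qed

lemma cond3: "TT \<circ> tmap muD id \<circ> r2l = tmap muD id \<circ> r2l \<circ> (T13 TT \<circ> tmap id (tmap id (tmap (inv \<alpha>A) (inv \<alpha>B)))) \<circ> tmap id TT"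
proof (rule lin6)
  show "klinear (TT \<circ> tmap muD id \<circ> r2l)" by (simp add: klinear_comp)
  show "klinear (tmap muD id \<circ> r2l \<circ> (T13 TT \<circ> tmap id (tmap id (tmap (inv \<alpha>A) (inv \<alpha>B)))) \<circ> tmap id TT)"
    by (simp add: klinear_comp)
  fix a b a' b' a'' b''
  have eq: "(\<lambda>u. reidx (\<lambda>(a, (b, a'), b'). ((a, b), (a', b'))) (tens (\<alpha>A (mA a a')) (tens (flip
        (tmap id (mlin mB) (l2r (tmap R id (r2l (tens b (tmap (inv \<alpha>A) id u)))))))
        (\<alpha>B b''))))
     = (\<lambda>u. tmap muD id (r2l (T13 TT (tmap id (tmap id (tmap (inv \<alpha>A) (inv \<alpha>B)))
        (tens (tens a b) (reidx (\<lambda>(a, (b, a'), b'). ((a, b), (a', b'))) (tens (\<alpha>A a') (tens (flip u) (\<alpha>B b'')))))))))"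
    apply (rule gen_first)
    subgoal for x y
    proof -
      have "(\<lambda>v. reidx (\<lambda>(a, (b, a'), b'). ((a, b), (a', b'))) (tens (\<alpha>A (mA a a')) (tens (flip
             (tmap id (mlin mB) (l2r (tens v y)))) (\<alpha>B b''))))
          = (\<lambda>v. tmap muD id (r2l (reidx (\<lambda>((x, z), y). (x, y, z)) (tens
             (reidx (\<lambda>(a, (b, a'), b'). ((a, b), (a', b'))) (tens (\<alpha>A a) (tens (flip v) (\<alpha>B b''))))
             (tens (\<alpha>A a') y)))))"
        by (rule gen_first) (simp, (intro lin | simp)+)
      from fun_cong[OF this, of "R (tens b (inv \<alpha>A x))"] show ?thesis by simp
    qed
    by (intro lin | simp)+
  from fun_cong[OF eq, of "R (tens b' a'')"]
  show "(TT \<circ> tmap muD id \<circ> r2l) (tens (tens a b) (tens (tens a' b') (tens a'' b''))) =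
        (tmap muD id \<circ> r2l \<circ> (T13 TT \<circ> tmap id (tmap id (tmap (inv \<alpha>A) (inv \<alpha>B)))) \<circ> tmap id TT)
          (tens (tens a b) (tens (tens a' b') (tens a'' b'')))"
    by simp
qed


abbreviation "P4 \<equiv> reidx (\<lambda>(a, (b, a'), b'). ((a, b), (a', b')))"

lemma cond4: "(T13 TT \<circ> tmap (tmap (inv \<alpha>A) (inv \<alpha>B)) id) \<circ> l2r \<circ> tmap TT id \<circ> r2l \<circ> tmap \<alpha> TT =
       (T13 TT \<circ> tmap id (tmap id (tmap (inv \<alpha>A) (inv \<alpha>B)))) \<circ> tmap id TT \<circ> l2r \<circ> tmap TT \<alpha> \<circ> r2l"
proof (rule lin6)
  show "klinear ((T13 TT \<circ> tmap (tmap (inv \<alpha>A) (inv \<alpha>B)) id) \<circ> l2r \<circ> tmap TT id \<circ> r2l \<circ> tmap \<alpha> TT)"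
    by (simp add: klinear_comp)
  show "klinear ((T13 TT \<circ> tmap id (tmap id (tmap (inv \<alpha>A) (inv \<alpha>B)))) \<circ> tmap id TT \<circ> l2r \<circ> tmap TT \<alpha> \<circ> r2l)"
    by (simp add: klinear_comp)
  fix a b a' b' a'' b''
  define E where "E = (\<lambda>u1 x2 y2. T13 TT (tmap (tmap (inv \<alpha>A) (inv \<alpha>B)) id (l2r (tens
      (P4 (tens (\<alpha>A (\<alpha>A a)) (tens (flip (tmap \<alpha>A \<alpha>B u1)) (\<alpha>B y2)))) (tens x2 (\<alpha>B b''))))))"
  define E' where "E' = (\<lambda>x1 y1 u2. T13 TT (tmap id (tmap id (tmap (inv \<alpha>A) (inv \<alpha>B))) (tens (tens (\<alpha>A a) y1)
      (P4 (tens (\<alpha>A x1) (tens (flip (tmap \<alpha>A \<alpha>B u2)) (\<alpha>B (\<alpha>B b''))))))))"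
  have Eb: "lext (\<lambda>(i, j). E u1 (bvec i) (bvec j)) (tens x y) = E u1 x y" for u1 x y
    by (rule lext_bil) (unfold E_def, (intro lin | simp)+)
  have E'b: "lext (\<lambda>(i, j). E' (bvec i) (bvec j) u2) (tens x y) = E' x y u2" for u2 x y
    by (rule lext_bil) (unfold E'_def, (intro lin | simp)+)
  have A: "(\<lambda>u2. T13 TT (tmap (tmap (inv \<alpha>A) (inv \<alpha>B)) id (l2r (tmap TT id (r2l (tens (tens (\<alpha>A a) (\<alpha>B b))
            (P4 (tens (\<alpha>A a') (tens (flip u2) (\<alpha>B b''))))))))))
     = (\<lambda>u2. lext (\<lambda>(i, j). E (R (tens b a')) (bvec i) (bvec j)) u2)"
    by (rule gen_first) (simp add: Eb, simp add: E_def, (intro lin klinear_lext | simp)+)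
  have B: "(\<lambda>u1. T13 TT (tmap id (tmap id (tmap (inv \<alpha>A) (inv \<alpha>B))) (tmap id TT (l2r (tens
            (P4 (tens (\<alpha>A a) (tens (flip u1) (\<alpha>B b')))) (tens (\<alpha>A a'') (\<alpha>B b'')))))))
     = (\<lambda>u1. lext (\<lambda>(i, j). E' (bvec i) (bvec j) (R (tens b' a''))) u1)"
    by (rule gen_first) (simp add: E'b, simp add: E'_def, (intro lin klinear_lext | simp)+)
  have C: "lext (\<lambda>(i, j). E u1 (bvec i) (bvec j)) u2 = lext (\<lambda>(i, j). E' (bvec i) (bvec j) u2) u1" for u1 u2
  proof (rule bil_pure[where F="\<lambda>u1 u2. lext (\<lambda>(i, j). E u1 (bvec i) (bvec j)) u2"
                        and G="\<lambda>u1 u2. lext (\<lambda>(i, j). E' (bvec i) (bvec j) u2) u1"])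
    show "klinear (\<lambda>u1. lext (\<lambda>(i, j). E u1 (bvec i) (bvec j)) u2)" for u2
      by (rule klinear_lext_param) (unfold E_def, (intro lin | simp)+)
    show "klinear (\<lambda>u2. lext (\<lambda>(i, j). E u1 (bvec i) (bvec j)) u2)" for u1
      by (simp add: klinear_lext)
    show "klinear (\<lambda>u1. lext (\<lambda>(i, j). E' (bvec i) (bvec j) u2) u1)" for u2
      by (simp add: klinear_lext)
    show "klinear (\<lambda>u2. lext (\<lambda>(i, j). E' (bvec i) (bvec j) u2) u1)" for u1
      by (rule klinear_lext_param) (unfold E'_def, (intro lin | simp)+)
    show "lext (\<lambda>(i, j). E (tens x1 y1) (bvec i) (bvec j)) (tens x2 y2) =
          lext (\<lambda>(i, j). E' (bvec i) (bvec j) (tens x2 y2)) (tens x1 y1)" for x1 y1 x2 y2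
      by (simp add: Eb E'b, simp add: E_def E'_def)
  qed
  note AA = fun_cong[OF A, of "R (tens b' a'')"]
  note BB = fun_cong[OF B, of "R (tens b a')"]
  show "((T13 TT \<circ> tmap (tmap (inv \<alpha>A) (inv \<alpha>B)) id) \<circ> l2r \<circ> tmap TT id \<circ> r2l \<circ> tmap \<alpha> TT)
          (tens (tens a b) (tens (tens a' b') (tens a'' b''))) =
        ((T13 TT \<circ> tmap id (tmap id (tmap (inv \<alpha>A) (inv \<alpha>B)))) \<circ> tmap id TT \<circ> l2r \<circ> tmap TT \<alpha> \<circ> r2l)
          (tens (tens a b) (tens (tens a' b') (tens a'' b'')))"
    using AA BB C[of "R (tens b a')" "R (tens b' a'')"] by simp
qed


lemma alpha_mu: "\<alpha> (muD w) = muD (tmap \<alpha> \<alpha> w)"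
proof -
  have "\<alpha> \<circ> muD = muD \<circ> tmap \<alpha> \<alpha>"
    by (rule lin4) (simp_all add: klinear_comp)
  then show ?thesis by (metis comp_apply)
qed

lemma assocD: "muD (tmap id muD w) = muD (tmap muD id (r2l w))"
proof -
  have "muD \<circ> tmap id muD = muD \<circ> tmap muD id \<circ> r2l"
    by (rule lin6) (simp_all add: klinear_comp assA assB)
  then show ?thesis by (metis comp_apply)
qed

lemma hom_assoc: "hom_associative (\<lambda>x y. muD (TT (tens x y))) \<alpha>"
  unfolding hom_associative_def
proof (intro conjI allI)
  show "kbilinear (\<lambda>x y. muD (TT (tens x y)))"
    unfolding kbilinear_def by (intro conjI allI; (intro lin | simp)+)
  show "klinear \<alpha>" by simp
next
  fix x y
  show "\<alpha> (muD (TT (tens x y))) = muD (TT (tens (\<alpha> x) (\<alpha> y)))"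
    using fun_cong[OF cond1, of "tens x y"] by (simp add: alpha_mu)
next
  fix x y z :: "'i \<times> 'j \<Rightarrow>\<^sub>0 'k"
  let ?w = "tens x (tens y z)"
  note c2 = fun_cong[OF cond2, unfolded comp_apply]
  note c3 = fun_cong[OF cond3, unfolded comp_apply]
  note c4 = fun_cong[OF cond4, unfolded comp_apply]
  have l: "tens (\<alpha> x) (muD (TT (tens y z))) = tmap id muD (tmap \<alpha> TT ?w)" by simp
  have r: "tens (muD (TT (tens x y))) (\<alpha> z) = tmap muD id (r2l (l2r (tmap TT \<alpha> (r2l ?w))))" by simp
  have "muD (TT (tens (\<alpha> x) (muD (TT (tens y z))))) = muD (TT (tmap id muD (tmap \<alpha> TT ?w)))"
    by (simp only: l)
  also have "\<dots> = muD (tmap id muD (T13 TT (tmap (tmap (inv \<alpha>A) (inv \<alpha>B)) id (l2r (tmap TT id (r2l (tmap \<alpha> TT ?w)))))))"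
    by (simp only: c2)
  also have "\<dots> = muD (tmap id muD (T13 TT (tmap id (tmap id (tmap (inv \<alpha>A) (inv \<alpha>B))) (tmap id TT (l2r (tmap TT \<alpha> (r2l ?w)))))))"
    by (simp only: c4)
  also have "\<dots> = muD (tmap muD id (r2l (T13 TT (tmap id (tmap id (tmap (inv \<alpha>A) (inv \<alpha>B))) (tmap id TT (l2r (tmap TT \<alpha> (r2l ?w))))))))"
    by (rule assocD)
  also have "\<dots> = muD (TT (tmap muD id (r2l (l2r (tmap TT \<alpha> (r2l ?w))))))"
    by (simp only: c3)
  also have "\<dots> = muD (TT (tens (muD (TT (tens x y))) (\<alpha> z)))"
    by (simp only: r)
  finally show "muD (TT (tens (\<alpha> x) (muD (TT (tens y z))))) = muD (TT (tens (muD (TT (tens x y))) (\<alpha> z)))" .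
qed

end

theorem proposition4p4:
  fixes mA :: "('i \<Rightarrow>\<^sub>0 'k::field) \<Rightarrow> ('i \<Rightarrow>\<^sub>0 'k) \<Rightarrow> ('i \<Rightarrow>\<^sub>0 'k)"
    and mB :: "('j \<Rightarrow>\<^sub>0 'k) \<Rightarrow> ('j \<Rightarrow>\<^sub>0 'k) \<Rightarrow> ('j \<Rightarrow>\<^sub>0 'k)"
    and \<alpha>A :: "('i \<Rightarrow>\<^sub>0 'k) \<Rightarrow> ('i \<Rightarrow>\<^sub>0 'k)"
    and \<alpha>B :: "('j \<Rightarrow>\<^sub>0 'k) \<Rightarrow> ('j \<Rightarrow>\<^sub>0 'k)"
    and R :: "('j \<times> 'i \<Rightarrow>\<^sub>0 'k) \<Rightarrow> ('i \<times> 'j \<Rightarrow>\<^sub>0 'k)"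
    and T :: "(('i \<times> 'j) \<times> ('i \<times> 'j) \<Rightarrow>\<^sub>0 'k) \<Rightarrow> (('i \<times> 'j) \<times> ('i \<times> 'j) \<Rightarrow>\<^sub>0 'k)"
  assumes "assoc_alg mA" and "assoc_alg mB"
    and "alg_endo mA \<alpha>A" and "bij \<alpha>A"
    and "alg_endo mB \<alpha>B" and "bij \<alpha>B"
    and "twisting_map mA mB \<alpha>A \<alpha>B R"
    and T_def: "T = reidx (\<lambda>(a, (b, a'), b'). ((a, b), (a', b')))
                 \<circ> tmap \<alpha>A (tmap (flip \<circ> R) \<alpha>B)
                 \<circ> reidx (\<lambda>((a, b), (a', b')). (a, (b, a'), b'))"
  shows "pseudotwistor (mlin (tens_mult mA mB)) (tmap \<alpha>A \<alpha>B) T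
           (T13 T \<circ> tmap (tmap (inv \<alpha>A) (inv \<alpha>B)) id)
           (T13 T \<circ> tmap id (tmap id (tmap (inv \<alpha>A) (inv \<alpha>B))))
       \<and> hom_associative (\<lambda>x y. mlin (tens_mult mA mB) (T (tens x y))) (tmap \<alpha>A \<alpha>B)
       \<and> (\<forall>a b a' b'. mlin (tens_mult mA mB) (T (tens (tens a b) (tens a' b'))) =
             tmap (mA (\<alpha>A a)) (\<lambda>y. mB y (\<alpha>B b')) (R (tens b a')))"
proof -
  interpret ctx mA mB \<alpha>A \<alpha>B R
    using assms(1-7) by (simp add: ctx_def)
  have TT: "T = TT" by (simp add: T_def TT_def)
  show ?thesis unfolding TT pseudotwistor_def
    using cond1 cond2 cond3 cond4 hom_assoc final
    by (simp add: klinear_comp)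
qed

end
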